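(* In the MAD-HTLC game $G(1,\mathrm{red})$ described in the context, $\mathcal{A}$ cannot increase her utility by deviating from the prescribed strategy.
   Context: Blockchain model: $n$ miners; miner $i$ has mining power $\lambda_i>0$, $\sum_i\lambda_i=1$. In each round exactly one miner is chosen, miner $i$ with probability $\lambda_i$, and creates a block containing one transaction of her choice, receiving its fee. An unrelated transaction offering the base fee $f$ is always available. Publishing a transaction reveals its contents (in particular preimages) to everyone. A contract can be redeemed by at most one confirmed transaction. All parties ($\mathcal{A}$, $\mathcal{B}$, miners) are rational and non-myopic with perfect information, with utility the expected tokens owned at the end of the game; miners play best responses. MAD-HTLC: preimages $pre_a,pre_b$ with digests $dig_a=H(pre_a)$, $dig_b=H(pre_b)$, chosen by $\mathcal{B}$; only $\mathcal{B}$ knows $pre_b$; $\mathcal{A}$ knows $pre_a$ only if $\mathcal{B}$ shared it with her. Contracts initiated in block $b_j$ with timeout $T$: MH-Dep ($v^{\mathrm{dep}}$ tokens), redeemable via dep-A (signature of $\mathcal{A}$ and $pre_a$; any block), dep-B (signature of $\mathcal{B}$ and $pre_b$; only at least $T$ blocks after initiation), dep-M (both $pre_a,pre_b$; any block); MH-Col ($v^{\mathrm{col}}$ tokens), redeemable only at least $T$ blocks after initiation via col-B (signature of $\mathcal{B}$) or col-M (both $pre_a,pre_b$). Game: $T$ rounds creating $b_{j+1},\dots,b_{j+T}$; in each round $\mathcal{A},\mathcal{B}$ alternately publish transactions (choosing which, when, and with what fee), then a random miner creates the block. Transactions: $tx^{\mathrm{dep}}_{\mathcal{A}}$ (MH-Dep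 via dep-A, fee $f<f^{\mathrm{dep}}_{\mathcal{A}}<v^{\mathrm{dep}}$); $tx^{\mathrm{dep}}_{\mathcal{B}}$ (MH-Dep via dep-B, fee $f<f^{\mathrm{dep}}_{\mathcal{B}}<v^{\mathrm{dep}}$); $tx^{\mathrm{col}}_{\mathcal{B}}$ (MH-Col via col-B, fee $f<f^{\mathrm{col}}_{\mathcal{B}}<v^{\mathrm{col}}$); $tx^{\mathrm{dc}}_{\mathcal{B}}$ (both, fee $f<f^{\mathrm{dc}}_{\mathcal{B}}<v^{\mathrm{dep}}+v^{\mathrm{col}}$). A miner may include an unrelated transaction (fee $f$), any currently valid published transaction, or, if both preimages were revealed by published transactions, her own transaction redeeming MH-Dep via dep-M (reward $v^{\mathrm{dep}}$, while unredeemed), MH-Col via col-M (reward $v^{\mathrm{col}}$, last round), or both (last round). $G(k,s)$ denotes the subgame just before round $k\in[1,T]$ with MH-Dep redeemable ($s=\mathrm{red}$) or already redeemed; the full game is $G(1,\mathrm{red})$. Prescribed strategies: if $\mathcal{A}$ knows $pre_a$ she publishes $tx^{\mathrm{dep}}_{\mathcal{A}}$ within the first $T-1$ rounds; otherwise she publishes nothing. $\mathcal{B}$ waits until block $b_{j+T-1}$ is created; if $\mathcal{A}$ has not published $tx^{\mathrm{dep}}_{\mathcal{A}}$ he publishes $tx^{\mathrm{dc}}_{\mathcal{B}}$, otherwise he publishes $tx^{\mathrm{col}}_{\mathcal{B}}$. *)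

theory Defs
  imports Complex_Main
begin

text \<open>Rounds are numbered 1..T; round k creates block b_(j+k), i.e. k blocks after initiation.
  In each round A moves first, then B, then a random miner (miner i with probability lam i)
  creates the block containing exactly one transaction.\<close>

datatype tx =
    TxA      (* tx^dep_A : MH-Dep via dep-A *)
  | TxBdep   (* tx^dep_B : MH-Dep via dep-B *)
  | TxBcol   (* tx^col_B : MH-Col via col-B *)
  | TxBdc    (* tx^dc_B  : both contracts by B *)
  | Unrel
  | OwnDepM  (* miner's own tx: MH-Dep via dep-M *)
  | OwnColM  (* miner's own tx: MH-Col via col-M *)
  | OwnBoth  (* miner's own tx: both via dep-M and col-M *)

text \<open>Record of one round: whether A published tx^dep_A in this round, the set of
  transactions B published in this round, the miner chosen, and the block content.\<close>
datatype rnd = Rnd (apub: bool) (bpub: "tx set") (mnr: nat) (blk: tx)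

type_synonym hist = "rnd list"

record params =
  vdep :: real
  vcol :: real
  fbase :: real
  fA :: real
  fB :: real
  fBc :: real
  fdc :: real
  T :: nat
  nm :: nat
  lam :: "nat \<Rightarrow> real"

fun reward :: "params \<Rightarrow> tx \<Rightarrow> real" where
  "reward p TxA = fA p"
| "reward p TxBdep = fB p"
| "reward p TxBcol = fBc p"
| "reward p TxBdc = fdc p"
| "reward p Unrel = fbase p"
| "reward p OwnDepM = vdep p"
| "reward p OwnColM = vcol p"
| "reward p OwnBoth = vdep p + vcol p"

definition A_published :: "hist \<Rightarrow> bool \<Rightarrow> bool" where
  "A_published h a \<longleftrightarrow> a \<or> (\<exists>r\<in>set h. apub r)"

definition published :: "hist \<Rightarrow> bool \<Rightarrow> tx set \<Rightarrow> tx \<Rightarrow> bool" where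
  "published h a bs c \<longleftrightarrow> (c = TxA \<and> A_published h a) \<or> c \<in> bs \<or> (\<exists>r\<in>set h. c \<in> bpub r)"

text \<open>Both preimages revealed by published transactions (pre_a by tx^dep_A,
  pre_b by tx^dep_B or tx^dc_B).\<close>
definition both_revealed :: "hist \<Rightarrow> bool \<Rightarrow> tx set \<Rightarrow> bool" where
  "both_revealed h a bs \<longleftrightarrow> published h a bs TxA \<and> (published h a bs TxBdep \<or> published h a bs TxBdc)"

definition dep_redeemed :: "hist \<Rightarrow> bool" where
  "dep_redeemed h \<longleftrightarrow> (\<exists>r\<in>set h. blk r \<in> {TxA, TxBdep, TxBdc, OwnDepM, OwnBoth})"

definition col_redeemed :: "hist \<Rightarrow> bool" where
  "col_redeemed h \<longleftrightarrow> (\<exists>r\<in>set h. blk r \<in> {TxBcol, TxBdc, OwnColM, OwnBoth})"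

text \<open>Transactions a miner may put in the block of round k = length h + 1.\<close>
fun valid :: "params \<Rightarrow> hist \<Rightarrow> bool \<Rightarrow> tx set \<Rightarrow> tx \<Rightarrow> bool" where
  "valid p h a bs Unrel = True"
| "valid p h a bs TxA = (published h a bs TxA \<and> \<not> dep_redeemed h)"
| "valid p h a bs TxBdep = (published h a bs TxBdep \<and> \<not> dep_redeemed h \<and> T p \<le> length h + 1)"
| "valid p h a bs TxBcol = (published h a bs TxBcol \<and> \<not> col_redeemed h \<and> T p \<le> length h + 1)"
| "valid p h a bs TxBdc = (published h a bs TxBdc \<and> \<not> dep_redeemed h \<and> \<not> col_redeemed h
                            \<and> T p \<le> length h + 1)"
| "valid p h a bs OwnDepM = (both_revealed h a bs \<and> \<not> dep_redeemed h)"
| "valid p h a bs OwnColM = (both_revealed h a bs \<and> \<not> col_redeemed h \<and> T p \<le> length h + 1)"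
| "valid p h a bs OwnBoth = (both_revealed h a bs \<and> \<not> dep_redeemed h \<and> \<not> col_redeemed h
                            \<and> T p \<le> length h + 1)"

definition B_presc :: "params \<Rightarrow> hist \<Rightarrow> bool \<Rightarrow> tx set" where
  "B_presc p h a = (if length h + 1 = T p then (if A_published h a then {TxBcol} else {TxBdc}) else {})"

text \<open>A strategy of A: given the history, whether to publish tx^dep_A in the current round.
  She can only actually do so if she knows pre_a (flag kn).\<close>
definition A_act :: "bool \<Rightarrow> (hist \<Rightarrow> bool) \<Rightarrow> hist \<Rightarrow> bool" where
  "A_act kn \<sigma> h \<longleftrightarrow> kn \<and> \<sigma> h"

definition prescribed_A :: "nat \<Rightarrow> hist \<Rightarrow> bool" where
  "prescribed_A r0 h \<longleftrightarrow> length h + 1 = r0"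

definition cur_step :: "params \<Rightarrow> bool \<Rightarrow> (hist \<Rightarrow> bool) \<Rightarrow> hist \<Rightarrow> nat \<Rightarrow> tx \<Rightarrow> rnd" where
  "cur_step p kn \<sigma> h i c = Rnd (A_act kn \<sigma> h) (B_presc p h (A_act kn \<sigma> h)) i c"

definition valid_now :: "params \<Rightarrow> bool \<Rightarrow> (hist \<Rightarrow> bool) \<Rightarrow> hist \<Rightarrow> tx \<Rightarrow> bool" where
  "valid_now p kn \<sigma> h c = valid p h (A_act kn \<sigma> h) (B_presc p h (A_act kn \<sigma> h)) c"

text \<open>Expected value of a terminal payoff g, with r rounds remaining from history h,
  when miner i (chosen with probability lam i) includes mu i h.\<close>
primrec expect :: "params \<Rightarrow> bool \<Rightarrow> (hist \<Rightarrow> bool) \<Rightarrow> (nat \<Rightarrow> hist \<Rightarrow> tx)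
                    \<Rightarrow> (hist \<Rightarrow> real) \<Rightarrow> nat \<Rightarrow> hist \<Rightarrow> real" where
  "expect p kn \<sigma> \<mu> g 0 h = g h"
| "expect p kn \<sigma> \<mu> g (Suc r) h =
     (\<Sum>i<nm p. lam p i * expect p kn \<sigma> \<mu> g r (h @ [cur_step p kn \<sigma> h i (\<mu> i h)]))"

definition A_payoff :: "params \<Rightarrow> hist \<Rightarrow> real" where
  "A_payoff p h = (if \<exists>r\<in>set h. blk r = TxA then vdep p - fA p else 0)"

definition miner_payoff :: "params \<Rightarrow> nat \<Rightarrow> hist \<Rightarrow> real" where
  "miner_payoff p i h = (\<Sum>r\<leftarrow>h. if mnr r = i then reward p (blk r) else 0)"

text \<open>Miners play (subgame-perfect) best responses: at every decision node (every history of
  length < T, every miner) the chosen transaction is valid and maximises that miner's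
  expected final payoff given continuation play.\<close>
definition miners_best_response :: "params \<Rightarrow> bool \<Rightarrow> (hist \<Rightarrow> bool) \<Rightarrow> (nat \<Rightarrow> hist \<Rightarrow> tx) \<Rightarrow> bool" where
  "miners_best_response p kn \<sigma> \<mu> \<longleftrightarrow>
    (\<forall>h i. length h < T p \<longrightarrow> i < nm p \<longrightarrow>
       valid_now p kn \<sigma> h (\<mu> i h) \<and>
       (\<forall>c. valid_now p kn \<sigma> h c \<longrightarrow>
          expect p kn \<sigma> \<mu> (miner_payoff p i) (T p - Suc (length h)) (h @ [cur_step p kn \<sigma> h i c])
          \<le> expect p kn \<sigma> \<mu> (miner_payoff p i) (T p - Suc (length h)) (h @ [cur_step p kn \<sigma> h i (\<mu> i h)])))"

definition utility_A :: "params \<Rightarrow> bool \<Rightarrow> (hist \<Rightarrow> bool) \<Rightarrow> (nat \<Rightarrow> hist \<Rightarrow> tx) \<Rightarrow> real" where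
  "utility_A p kn \<sigma> \<mu> = expect p kn \<sigma> \<mu> (A_payoff p) (T p) []"

end

theory Submission imports Defs begin

lemma mp_snoc: "miner_payoff p i (h @ [x]) = miner_payoff p i h + (if mnr x = i then reward p (blk x) else 0)"
  by (simp add: miner_payoff_def)

lemma expect_one:
  assumes "(\<Sum>i<nm p. lam p i) = 1" "i < nm p"
  shows "expect p kn \<sigma> \<mu> (miner_payoff p i) (Suc 0) h = miner_payoff p i h + lam p i * reward p (\<mu> i h)"
proof -
  have "expect p kn \<sigma> \<mu> (miner_payoff p i) (Suc 0) h
      = (\<Sum>j<nm p. lam p j * miner_payoff p i h + (if j = i then lam p j * reward p (\<mu> j h) else 0))"
    by (simp add: mp_snoc cur_step_def algebra_simps if_distrib cong: if_cong)
  also have "\<dots> = miner_payoff p i h * (\<Sum>j<nm p. lam p j) + lam p i * reward p (\<mu> i h)"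
    using assms(2) by (simp add: sum.distrib sum_distrib_left mult.commute)
  finally show ?thesis using assms(1) by simp
qed

lemma expect_inv:
  assumes sum1: "(\<Sum>i<nm p. lam p i) = 1"
    and fin: "\<And>h. Q h \<Longrightarrow> length h = T p \<Longrightarrow> g h = c"
    and pres: "\<And>h j. Q h \<Longrightarrow> length h < T p \<Longrightarrow> j < nm p \<Longrightarrow> Q (h @ [cur_step p kn \<sigma> h j (\<mu> j h)])"
  shows "Q h \<Longrightarrow> length h + r = T p \<Longrightarrow> expect p kn \<sigma> \<mu> g r h = c"
proof (induction r arbitrary: h)
  case 0 then show ?case using fin by simp
next
  case (Suc r)
  have "expect p kn \<sigma> \<mu> g (Suc r) h = (\<Sum>j<nm p. lam p j * c)"
    using Suc pres by (auto intro!: sum.cong)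
  also have "\<dots> = c" using sum1 by (simp add: sum_distrib_right[symmetric])
  finally show ?case .
qed

lemma expect_le:
  assumes sum1: "(\<Sum>i<nm p. lam p i) = 1" and pos: "\<forall>i<nm p. lam p i > 0"
    and bd: "\<And>h. g h \<le> M"
  shows "expect p kn \<sigma> \<mu> g r h \<le> M"
proof (induction r arbitrary: h)
  case 0 then show ?case using bd by simp
next
  case (Suc r)
  have "expect p kn \<sigma> \<mu> g (Suc r) h \<le> (\<Sum>j<nm p. lam p j * M)"
    unfolding expect.simps
    by (rule sum_mono) (use Suc pos in \<open>auto intro!: mult_left_mono less_imp_le\<close>)
  also have "\<dots> = M" using sum1 by (simp add: sum_distrib_right[symmetric])
  finally show ?case .
qed


definition madinv :: "params \<Rightarrow> nat \<Rightarrow> hist \<Rightarrow> bool" where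
  "madinv p r0 h \<longleftrightarrow> length h + 2 \<le> T p \<and> (\<forall>j<length h. apub (h!j) = (Suc j = r0))
     \<and> (\<forall>r\<in>set h. bpub r = {} \<and> (blk r = Unrel \<or> blk r = TxA))"

definition good :: "hist \<Rightarrow> bool" where
  "good h \<longleftrightarrow> (\<exists>r\<in>set h. blk r = TxA)"

lemma Apub_inv:
  assumes "madinv p r0 h" "1 \<le> r0" "r0 \<le> length h + 1"
  shows "A_published h (A_act True (prescribed_A r0) h)"
proof (cases "r0 = length h + 1")
  case True then show ?thesis by (simp add: A_published_def A_act_def prescribed_A_def)
next
  case False
  then have "r0 - 1 < length h" using assms by simp
  then have "apub (h ! (r0 - 1))" using assms(1,2) unfolding madinv_def by auto
  moreover have "h ! (r0 - 1) \<in> set h" using \<open>r0 - 1 < length h\<close> by simp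
  ultimately show ?thesis unfolding A_published_def by blast
qed

lemma key_round:
  assumes pos: "\<forall>i<nm p. lam p i > 0" and sum1: "(\<Sum>i<nm p. lam p i) = 1"
    and f1: "fbase p < fA p" and f2: "fbase p < fBc p"
    and r0: "1 \<le> r0" "r0 < T p"
    and mbr: "miners_best_response p True (prescribed_A r0) \<mu>0"
    and iv: "madinv p r0 h" and len: "length h + 2 = T p" and ng: "\<not> good h" and i: "i < nm p"
  shows "\<mu>0 i h = TxA"
proof (rule ccontr)
  assume ne: "\<mu>0 i h \<noteq> TxA"
  define P where "P = prescribed_A r0"
  define a where "a = A_act True P h"
  have bs: "B_presc p h a = {}" using len by (simp add: B_presc_def)
  have Apub: "A_published h a" using Apub_inv[OF iv r0(1)] r0 len unfolding a_def P_def by simp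
  have hb: "\<forall>r\<in>set h. bpub r = {} \<and> blk r = Unrel" using iv ng unfolding madinv_def good_def by auto
  have ndr: "\<not> dep_redeemed h" "\<not> col_redeemed h" using hb by (auto simp: dep_redeemed_def col_redeemed_def)
  have vc: "valid_now p True P h c \<Longrightarrow> c = Unrel \<or> c = TxA" for c
    using len bs hb unfolding valid_now_def a_def[symmetric]
    by (cases c) (auto simp: both_revealed_def published_def)
  have lt: "length h < T p" using len by simp
  have v0: "valid_now p True P h (\<mu>0 i h)" using mbr lt i unfolding miners_best_response_def P_def by blast
  have u: "\<mu>0 i h = Unrel" using vc[OF v0] ne by simp
  have vA: "valid_now p True P h TxA" using Apub ndr unfolding valid_now_def a_def[symmetric]
    by (simp add: published_def)
  have Tm: "T p - Suc (length h) = Suc 0" using len by simp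
  have br: "expect p True P \<mu>0 (miner_payoff p i) (Suc 0) (h @ [cur_step p True P h i TxA])
      \<le> expect p True P \<mu>0 (miner_payoff p i) (Suc 0) (h @ [cur_step p True P h i Unrel])"
    using mbr lt i vA u unfolding miners_best_response_def P_def Tm[symmetric] by metis
  define h1 where "h1 = h @ [cur_step p True P h i TxA]"
  define h2 where "h2 = h @ [cur_step p True P h i Unrel]"
  have l1: "length h1 < T p" "length h1 + 1 = T p" using len by (auto simp: h1_def)
  have l2: "length h2 < T p" "length h2 + 1 = T p" using len by (auto simp: h2_def)
  have a1: "A_published h1 x" for x using Apub unfolding h1_def a_def
    by (auto simp: A_published_def cur_step_def)
  have a2: "A_published h2 x" for x using Apub unfolding h2_def a_def
    by (auto simp: A_published_def cur_step_def)
  have bs1: "B_presc p h1 y = {TxBcol}" for y using l1 a1 by (simp add: B_presc_def)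
  have bs2: "B_presc p h2 y = {TxBcol}" for y using l2 a2 by (simp add: B_presc_def)
  have vB: "valid_now p True P h1 TxBcol" using l1 bs1 hb
    by (auto simp: valid_now_def published_def col_redeemed_def h1_def cur_step_def)
  have Tm1: "T p - Suc (length h1) = 0" using l1 by simp
  have br1: "miner_payoff p i (h1 @ [cur_step p True P h1 i TxBcol])
      \<le> miner_payoff p i (h1 @ [cur_step p True P h1 i (\<mu>0 i h1)])"
    using mbr l1(1) i vB unfolding miners_best_response_def P_def
    by (metis Tm1 expect.simps(1))
  have rw1: "fBc p \<le> reward p (\<mu>0 i h1)" using br1 by (simp add: mp_snoc cur_step_def)
  have v2: "valid_now p True P h2 (\<mu>0 i h2)" using mbr l2(1) i unfolding miners_best_response_def P_def by blast
  have rw2: "reward p (\<mu>0 i h2) \<le> max (fA p) (fBc p)"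
  proof -
    have "\<mu>0 i h2 \<in> {Unrel, TxA, TxBcol}"
      using v2 bs2 hb bs unfolding valid_now_def
      by (cases "\<mu>0 i h2") (auto simp: both_revealed_def published_def h2_def cur_step_def a_def)
    then show ?thesis using f1 by auto
  qed
  have e1: "expect p True P \<mu>0 (miner_payoff p i) (Suc 0) h1 \<ge> miner_payoff p i h + fA p + lam p i * fBc p"
    using rw1 pos i unfolding expect_one[OF sum1 i] by (simp add: mp_snoc h1_def cur_step_def)
  have e2: "expect p True P \<mu>0 (miner_payoff p i) (Suc 0) h2 \<le> miner_payoff p i h + fbase p + lam p i * max (fA p) (fBc p)"
    using rw2 pos i unfolding expect_one[OF sum1 i] by (simp add: mp_snoc h2_def cur_step_def mult_left_mono less_imp_le)
  have l1': "lam p i \<le> 1" using sum1 pos i member_le_sum[of i "{..<nm p}" "lam p"] by fastforce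
  have "fA p + lam p i * fBc p > fbase p + lam p i * max (fA p) (fBc p)"
  proof (cases "fA p \<le> fBc p")
    case True then show ?thesis using f1 by simp
  next
    case False
    have "lam p i * (fA p - fBc p) \<le> fA p - fBc p" using l1' False by (simp add: mult_left_le_one_le)
    then show ?thesis using False f2 by (simp add: algebra_simps)
  qed
  then show False using br e1 e2 unfolding h1_def h2_def by linarith
qed


lemma kn_false:
  assumes sum1: "(\<Sum>i<nm p. lam p i) = 1" and mbr: "miners_best_response p False \<sigma> \<mu>"
  shows "utility_A p False \<sigma> \<mu> = 0"
proof -
  let ?Q = "\<lambda>h::hist. \<forall>r\<in>set h. blk r \<noteq> TxA \<and> \<not> apub r \<and> TxA \<notin> bpub r"
  have "?Q [] \<longrightarrow> length [] + T p = T p \<longrightarrow> expect p False \<sigma> \<mu> (A_payoff p) (T p) [] = 0"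
  proof (intro impI expect_inv[where Q = ?Q, OF sum1])
    show "A_payoff p h = 0" if "?Q h" for h using that by (auto simp: A_payoff_def)
  next
    fix h j assume q: "?Q h" and l: "length h < T p" and j: "j < nm p"
    have v: "valid_now p False \<sigma> h (\<mu> j h)" using mbr l j unfolding miners_best_response_def by blast
    have "\<mu> j h \<noteq> TxA"
    proof
      assume "\<mu> j h = TxA"
      then show False using v q by (auto simp: valid_now_def published_def A_published_def A_act_def B_presc_def split: if_splits)
    qed
    then show "?Q (h @ [cur_step p False \<sigma> h j (\<mu> j h)])" using q
      by (auto simp: cur_step_def A_act_def B_presc_def)
  qed auto
  then show ?thesis by (simp add: utility_A_def)
qed

theorem lemma5:
  fixes p :: params and kn :: bool and \<sigma> :: "hist \<Rightarrow> bool"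
    and \<mu> \<mu>0 :: "nat \<Rightarrow> hist \<Rightarrow> tx" and r0 :: nat
  assumes "\<forall>i<nm p. lam p i > 0" and "(\<Sum>i<nm p. lam p i) = 1"
    and "fbase p < fA p" and "fA p < vdep p"
    and "fbase p < fB p" and "fB p < vdep p"
    and "fbase p < fBc p" and "fBc p < vcol p"
    and "fbase p < fdc p" and "fdc p < vdep p + vcol p"
    and "2 \<le> T p" and "1 \<le> r0" and "r0 < T p"
    and "miners_best_response p kn \<sigma> \<mu>"
    and "miners_best_response p kn (prescribed_A r0) \<mu>0"
  shows "utility_A p kn \<sigma> \<mu> \<le> utility_A p kn (prescribed_A r0) \<mu>0"
proof (cases kn)
  case False
  then show ?thesis using kn_false[OF assms(2)] assms(14,15) by simp
next
  case True
  define M where "M = vdep p - fA p"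
  have Mpos: "0 < M" using assms(4) by (simp add: M_def)
  have up: "utility_A p kn \<sigma> \<mu> \<le> M" unfolding utility_A_def
    by (rule expect_le[OF assms(2,1)]) (use Mpos in \<open>auto simp: A_payoff_def M_def\<close>)
  define P where "P = prescribed_A r0"
  have mbr: "miners_best_response p True P \<mu>0" using assms(15) True by (simp add: P_def)
  let ?Q = "\<lambda>h. madinv p r0 h \<or> good h"
  have "?Q [] \<longrightarrow> length [] + T p = T p \<longrightarrow> expect p True P \<mu>0 (A_payoff p) (T p) [] = M"
  proof (intro impI expect_inv[where Q = ?Q, OF assms(2)])
    show "A_payoff p h = M" if "?Q h" "length h = T p" for h
      using that by (auto simp: A_payoff_def M_def madinv_def good_def)
  next
    fix h j assume q: "?Q h" and l: "length h < T p" and j: "j < nm p"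
    let ?x = "cur_step p True P h j (\<mu>0 j h)"
    show "?Q (h @ [?x])"
    proof (cases "good h")
      case True then show ?thesis by (auto simp: good_def)
    next
      case ng: False
      then have iv: "madinv p r0 h" using q by simp
      show ?thesis
      proof (cases "length h + 2 = T p")
        case True
        have "\<mu>0 j h = TxA" using key_round[OF assms(1,2,3,7,12,13) _ iv True ng j] mbr P_def by simp
        then show ?thesis by (auto simp: good_def cur_step_def)
      next
        case False
        then have l2: "length h + 3 \<le> T p" using iv by (simp add: madinv_def)
        have bs: "B_presc p h a = {}" for a using l2 by (simp add: B_presc_def)
        have hb: "\<forall>r\<in>set h. bpub r = {}" using iv by (simp add: madinv_def)
        have v: "valid_now p True P h (\<mu>0 j h)" using mbr l j unfolding miners_best_response_def by blast
        have c: "\<mu>0 j h = Unrel \<or> \<mu>0 j h = TxA"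
          using v l2 bs hb unfolding valid_now_def
          by (cases "\<mu>0 j h") (auto simp: both_revealed_def published_def)
        have "madinv p r0 (h @ [?x])"
          using iv l2 c bs unfolding madinv_def
          by (auto simp: nth_append cur_step_def A_act_def P_def prescribed_A_def)
        then show ?thesis by simp
      qed
    qed
  qed (use assms(11) in \<open>auto simp: madinv_def\<close>)
  moreover have "madinv p r0 []" using assms(11) by (simp add: madinv_def)
  ultimately have "utility_A p kn P \<mu>0 = M" using True by (simp add: utility_A_def)
  then show ?thesis using up P_def by simp
qed

end
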